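(* Let $\widehat{\mathbf{H}}_u,\mathbf{L}_1\in\mathbb{R}^{N_s\times N_b}$, $\lambda>0$, $\gamma_u\ge0$, $\beta_u\in\mathbb{R}$, $\mu_0>0$, $\rho>1$, $\mu_{\max}\ge\mu_0$. Let $f(\mathbf{L})=\|\mathbf{L}\|_*+\gamma_u\|\mathbf{L}-\beta_u\mathbf{L}_1\|_F^2$ and $g(\mathbf{S})=\lambda\|\mathbf{S}\|_1$, and consider the sequence $\{(\mathbf{L}_u^k,\mathbf{S}_u^k,\mathbf{Y}^k)\}_{k\ge0}$ generated from $\mathbf{S}_u^0=\mathbf{0}$, $\mathbf{Y}^0=\mathbf{0}$ by $$\mathbf{L}_u^{k+1}=\arg\min_{\mathbf{L}} f(\mathbf{L})+\tfrac{\mu_k}{2}\bigl\|\mathbf{L}-(\widehat{\mathbf{H}}_u-\mathbf{S}_u^k+\tfrac{1}{\mu_k}\mathbf{Y}^k)\bigr\|_F^2,$$ $$\mathbf{S}_u^{k+1}=\arg\min_{\mathbf{S}} g(\mathbf{S})+\tfrac{\mu_k}{2}\bigl\|\mathbf{S}-(\widehat{\mathbf{H}}_u-\mathbf{L}_u^{k+1}+\tfrac{1}{\mu_k}\mathbf{Y}^k)\bigr\|_F^2,$$ $$\mathbf{Y}^{k+1}=\mathbf{Y}^k+\mu_k(\widehat{\mathbf{H}}_u-\mathbf{L}_u^{k+1}-\mathbf{S}_u^{k+1}),\qquad \mu_{k+1}=\min\{\rho\mu_k,\mu_{\max}\}.$$ Then the sequence $\{(\mathbf{L}_u^k,\mathbf{S}_u^k)\}$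 is bounded.
   Context: $\|\cdot\|_*$ is the nuclear norm, $\|\cdot\|_1$ the entrywise $\ell_1$-norm, $\|\cdot\|_F$ the Frobenius norm. These iterations are the ADMM scheme for $\min_{\mathbf{L},\mathbf{S}} f(\mathbf{L})+g(\mathbf{S})$ subject to $\mathbf{L}+\mathbf{S}=\widehat{\mathbf{H}}_u$, with augmented Lagrangian $\mathcal{L}_\mu(\mathbf{L},\mathbf{S},\mathbf{Y})=f(\mathbf{L})+g(\mathbf{S})+\langle\mathbf{Y},\widehat{\mathbf{H}}_u-\mathbf{L}-\mathbf{S}\rangle+\frac{\mu}{2}\|\widehat{\mathbf{H}}_u-\mathbf{L}-\mathbf{S}\|_F^2$, $\langle\mathbf{A},\mathbf{B}\rangle=\mathrm{tr}(\mathbf{A}^\top\mathbf{B})$. *)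

theory Defs
  imports "HOL-Analysis.Analysis"
begin

text \<open>Matrices in R^(Ns x Nb) are rendered as real^'b^'s (rows indexed by 's, columns by 'b).\<close>

definition frob_norm :: "real^'b^'s \<Rightarrow> real" where
  "frob_norm A = sqrt (\<Sum>i\<in>UNIV. \<Sum>j\<in>UNIV. (A $ i $ j)\<^sup>2)"

definition l1_norm :: "real^'b^'s \<Rightarrow> real" where
  "l1_norm A = (\<Sum>i\<in>UNIV. \<Sum>j\<in>UNIV. \<bar>A $ i $ j\<bar>)"

definition psd :: "real^'n^'n \<Rightarrow> bool" where
  "psd P \<longleftrightarrow> transpose P = P \<and> (\<forall>x. 0 \<le> x \<bullet> (P *v x))"

text \<open>Nuclear (trace) norm: trace of the unique positive semidefinite square root
  of A^T A, i.e. the sum of the singular values of A.\<close>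
definition nuclear_norm :: "real^'b^'s \<Rightarrow> real" where
  "nuclear_norm A = trace (THE P :: real^'b^'b. psd P \<and> P ** P = transpose A ** A)"

end

theory Submission
  imports Defs
begin

lemma sym_inner:
  fixes M :: "real^'n^'n"
  assumes "transpose M = M"
  shows "(M *v x) \<bullet> y = x \<bullet> (M *v y)"
proof -
  have "M *v x = x v* M" using assms by (metis transpose_matrix_vector)
  then show ?thesis by (simp add: dot_lmul_matrix)
qed

lemma spectral_sub:
  fixes M :: "real^'n^'n"
  assumes sym: "transpose M = M"
  shows "subspace W \<Longrightarrow> (\<forall>x\<in>W. M *v x \<in> W) \<Longrightarrow> \<exists>B. B \<subseteq> W \<and> finite B \<and> span B = W \<and>
     pairwise orthogonal B \<and> (\<forall>b\<in>B. norm b = 1 \<and> (\<exists>l. M *v b = l *\<^sub>R b))"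
proof (induction "dim W" arbitrary: W rule: less_induct)
  case less
  show ?case
  proof (cases "W = {0}")
    case True
    then show ?thesis by (intro exI[of _ "{}"]) auto
  next
    case False
    then obtain x0 where x0: "x0 \<in> W" "x0 \<noteq> 0" using less.prems(1) subspace_0 by blast
    define S where "S = W \<inter> sphere 0 1"
    have cS: "compact S" unfolding S_def
      using closed_subspace[OF less.prems(1)] compact_sphere by (metis Int_commute compact_Int_closed)
    have "x0 /\<^sub>R norm x0 \<in> S" using x0 less.prems(1) unfolding S_def
      by (simp add: subspace_scale)
    then have neS: "S \<noteq> {}" by blast
    have contS: "continuous_on S (\<lambda>x. x \<bullet> (M *v x))"
      by (intro continuous_intros linear_continuous_on matrix_vector_mul_bounded_linear)
    obtain v where vS: "v \<in> S" and vmax: "\<forall>y\<in>S. y \<bullet> (M *v y) \<le> v \<bullet> (M *v v)"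
      using continuous_attains_sup[OF cS neS contS] by blast
    define l where "l = v \<bullet> (M *v v)"
    have vW: "v \<in> W" and vn: "norm v = 1" using vS unfolding S_def by auto
    have vv: "v \<bullet> v = 1" using vn by (simp add: norm_eq_1)
    have quad: "x \<bullet> (M *v x) \<le> l * (x \<bullet> x)" if "x \<in> W" for x
    proof (cases "x = 0")
      case True then show ?thesis by simp
    next
      case False
      let ?y = "x /\<^sub>R norm x"
      have "?y \<in> S" using that False less.prems(1) unfolding S_def by (simp add: subspace_scale)
      then have "?y \<bullet> (M *v ?y) \<le> l" using vmax l_def by blast
      moreover have "?y \<bullet> (M *v ?y) = (x \<bullet> (M *v x)) / (norm x)^2"
        by (simp add: matrix_vector_mult_scaleR power2_eq_square field_simps)
      ultimately have "x \<bullet> (M *v x) \<le> l * (norm x)^2" using False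
        by (simp add: divide_le_eq)
      then show ?thesis by (simp add: power2_norm_eq_inner)
    qed
    define w where "w = M *v v - l *\<^sub>R v"
    have MvW: "M *v v \<in> W" using less.prems(2) vW by blast
    have wW: "w \<in> W" unfolding w_def using MvW vW less.prems(1)
      by (simp add: subspace_diff subspace_scale)
    have vw: "v \<bullet> w = 0" unfolding w_def l_def by (simp add: inner_diff_right vv)
    have vMw: "v \<bullet> (M *v w) = w \<bullet> w"
    proof -
      have "v \<bullet> (M *v w) = (M *v v) \<bullet> w" using sym_inner[OF sym] by simp
      also have "M *v v = w + l *\<^sub>R v" unfolding w_def by simp
      finally show ?thesis using vw by (simp add: inner_add_left inner_add_right inner_commute)
    qed
    have wMv: "w \<bullet> (M *v v) = w \<bullet> w"
      using vMw sym_inner[OF sym, of w v] by (simp add: inner_commute)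
    have key: "2 * t * (w \<bullet> w) \<le> t^2 * (l * (w \<bullet> w) - w \<bullet> (M *v w))" for t :: real
    proof -
      have xW: "v + t *\<^sub>R w \<in> W" using vW wW less.prems(1) by (simp add: subspace_add subspace_scale)
      have "(v + t *\<^sub>R w) \<bullet> (M *v (v + t *\<^sub>R w)) = l + 2 * t * (w \<bullet> w) + t^2 * (w \<bullet> (M *v w))"
        by (simp add: matrix_vector_right_distrib matrix_vector_mult_scaleR inner_add_left inner_add_right
            l_def vMw wMv power2_eq_square algebra_simps)
      moreover have "(v + t *\<^sub>R w) \<bullet> (v + t *\<^sub>R w) = 1 + t^2 * (w \<bullet> w)"
        by (simp add: inner_add_left inner_add_right vv vw inner_commute power2_eq_square)
      ultimately show ?thesis using quad[OF xW] by (simp add: algebra_simps)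
    qed
    have w0: "w = 0"
    proof (rule ccontr)
      assume "w \<noteq> 0"
      then have pos: "w \<bullet> w > 0" by simp
      define K where "K = \<bar>l * (w \<bullet> w) - w \<bullet> (M *v w)\<bar> + 1"
      have Kpos: "K > 0" unfolding K_def by simp
      define t where "t = (w \<bullet> w) / K"
      have tpos: "t > 0" unfolding t_def using pos Kpos by simp
      have "2 * t * (w \<bullet> w) \<le> t^2 * K"
        using key[of t] tpos unfolding K_def
        by (smt (verit, best) mult_left_mono power2_eq_square zero_le_power2)
      then have "2 * (w \<bullet> w) \<le> t * K" using tpos by (simp add: power2_eq_square)
      also have "t * K = w \<bullet> w" unfolding t_def using Kpos by simp
      finally show False using pos by simp
    qed
    then have Mv: "M *v v = l *\<^sub>R v" unfolding w_def by simp
    define W' where "W' = W \<inter> {x. v \<bullet> x = 0}"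
    have sW': "subspace W'" unfolding W'_def using less.prems(1) subspace_hyperplane subspace_inter by blast
    have invW': "\<forall>x\<in>W'. M *v x \<in> W'"
    proof
      fix x assume "x \<in> W'"
      then have "x \<in> W" "v \<bullet> x = 0" unfolding W'_def by auto
      moreover have "v \<bullet> (M *v x) = (M *v v) \<bullet> x" using sym_inner[OF sym] by simp
      ultimately show "M *v x \<in> W'" unfolding W'_def using less.prems(2) Mv by auto
    qed
    have "v \<notin> W'" unfolding W'_def using vv by auto
    then have "W' \<subset> W" unfolding W'_def using vW by blast
    then have "dim W' < dim W"
      using dim_psubset[of W' W] sW' less.prems(1) by (metis span_eq_iff)
    then obtain B' where B': "B' \<subseteq> W'" "finite B'" "span B' = W'" "pairwise orthogonal B'"
      "\<forall>b\<in>B'. norm b = 1 \<and> (\<exists>l. M *v b = l *\<^sub>R b)"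
      using less.hyps[OF _ sW' invW'] by blast
    show ?thesis
    proof (intro exI[of _ "insert v B'"] conjI)
      show "insert v B' \<subseteq> W" using B'(1) vW unfolding W'_def by auto
      show "finite (insert v B')" using B'(2) by simp
      show "pairwise orthogonal (insert v B')"
        using B'(4) B'(1) unfolding pairwise_insert W'_def orthogonal_def
        by (auto simp: inner_commute)
      show "\<forall>b\<in>insert v B'. norm b = 1 \<and> (\<exists>l. M *v b = l *\<^sub>R b)" using B'(5) vn Mv by auto
      show "span (insert v B') = W"
      proof
        show "span (insert v B') \<subseteq> W" using B'(1) vW less.prems(1) unfolding W'_def
          by (metis (no_types, lifting) Int_iff insert_subset span_minimal subsetI subset_iff)
        show "W \<subseteq> span (insert v B')"
        proof
          fix x assume xW: "x \<in> W"
          have "x - (v \<bullet> x) *\<^sub>R v \<in> W'" unfolding W'_def using xW vW less.prems(1) vv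
            by (simp add: subspace_diff subspace_scale inner_diff_right)
          then have "x - (v \<bullet> x) *\<^sub>R v \<in> span (insert v B')" using B'(3) span_mono[of B' "insert v B'"] by auto
          moreover have "(v \<bullet> x) *\<^sub>R v \<in> span (insert v B')" by (simp add: span_base span_scale)
          ultimately have "x - (v \<bullet> x) *\<^sub>R v + (v \<bullet> x) *\<^sub>R v \<in> span (insert v B')" by (rule span_add)
          then show "x \<in> span (insert v B')" by simp
        qed
      qed
    qed
  qed
qed

definition onb :: "(real^'n) set \<Rightarrow> bool" where
  "onb B \<longleftrightarrow> finite B \<and> span B = UNIV \<and> pairwise orthogonal B \<and> (\<forall>b\<in>B. norm b = 1)"

lemma onb_inner:
  assumes "onb B" "b \<in> B" "c \<in> B"
  shows "b \<bullet> c = (if b = c then 1 else 0)"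
proof (cases "b = c")
  case True then show ?thesis using assms unfolding onb_def by (simp add: norm_eq_1)
next
  case False then show ?thesis using assms unfolding onb_def pairwise_def orthogonal_def by auto
qed

lemma onb_coeff:
  assumes "onb B" "b \<in> B"
  shows "b \<bullet> (\<Sum>c\<in>B. f c *\<^sub>R c) = f b"
proof -
  have fin: "finite B" using assms unfolding onb_def by simp
  have "b \<bullet> (\<Sum>c\<in>B. f c *\<^sub>R c) = (\<Sum>c\<in>B. f c * (b \<bullet> c))" by (simp add: inner_sum_right)
  also have "\<dots> = (\<Sum>c\<in>B. if c = b then f c else 0)"
    by (rule sum.cong) (use onb_inner[OF assms(1) assms(2)] in auto)
  also have "\<dots> = f b" using fin assms(2) by simp
  finally show ?thesis .
qed

lemma onb_expand:
  assumes "onb B"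
  shows "x = (\<Sum>b\<in>B. (b \<bullet> x) *\<^sub>R b)"
proof -
  have fin: "finite B" using assms unfolding onb_def by simp
  have "x \<in> span B" using assms unfolding onb_def by simp
  then obtain u where u: "x = (\<Sum>v\<in>B. u v *\<^sub>R v)" using span_finite[OF fin] by auto
  have c: "\<And>b. b \<in> B \<Longrightarrow> b \<bullet> x = u b" using onb_coeff[OF assms] u by simp
  have h: "(\<Sum>b\<in>B. (b \<bullet> x) *\<^sub>R b) = (\<Sum>b\<in>B. u b *\<^sub>R b)"
    by (rule sum.cong) (simp_all add: c)
  show ?thesis by (simp only: h u[symmetric])
qed

lemma onb_parseval:
  assumes "onb B"
  shows "x \<bullet> y = (\<Sum>b\<in>B. (b \<bullet> x) * (b \<bullet> y))"
proof -
  have "x \<bullet> y = (\<Sum>b\<in>B. (b \<bullet> x) *\<^sub>R b) \<bullet> y" using onb_expand[OF assms, of x, symmetric] by (simp only:)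
  also have "\<dots> = (\<Sum>b\<in>B. (b \<bullet> x) * (b \<bullet> y))" by (simp add: inner_sum_left)
  finally show ?thesis .
qed

lemma onb_trace:
  fixes P :: "real^'n^'n"
  assumes "onb B"
  shows "trace P = (\<Sum>b\<in>B. b \<bullet> (P *v b))"
proof -
  have "(\<Sum>b\<in>B. b \<bullet> (P *v b)) = (\<Sum>b\<in>B. \<Sum>i\<in>UNIV. \<Sum>j\<in>UNIV. P$i$j * (b$i * b$j))"
    unfolding inner_vec_def matrix_vector_mult_def
    unfolding inner_vec_def matrix_vector_mult_def
    by (auto simp: sum_distrib_left intro!: sum.cong simp: mult_ac)
  also have "\<dots> = (\<Sum>i\<in>UNIV. \<Sum>j\<in>UNIV. P$i$j * (\<Sum>b\<in>B. b$i * b$j))"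
    unfolding sum_distrib_left by (subst sum.swap, rule sum.cong, simp, subst sum.swap, simp)
  also have "\<dots> = (\<Sum>i\<in>UNIV. \<Sum>j\<in>UNIV. P$i$j * (axis i 1 \<bullet> axis j (1::real)))"
  proof -
    have "(\<Sum>b\<in>B. b$i * b$j) = axis i 1 \<bullet> axis j (1::real)" for i j
      using onb_parseval[OF assms, of "axis i 1" "axis j 1"] by (simp add: inner_axis mult.commute)
    then show ?thesis by presburger
  qed
  also have "\<dots> = trace P" unfolding trace_def
    by (rule sum.cong, simp, simp add: inner_axis_axis if_distrib cong: if_cong)
  finally show ?thesis by simp
qed

lemma spectral:
  fixes M :: "real^'n^'n"
  assumes "transpose M = M"
  shows "\<exists>B. onb B \<and> (\<forall>b\<in>B. \<exists>l. M *v b = l *\<^sub>R b)"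
  using spectral_sub[OF assms, of UNIV] unfolding onb_def by auto

lemma tA_inner:
  fixes A :: "real^'b^'s"
  shows "x \<bullet> (transpose A *v y) = (A *v x) \<bullet> y"
  by (metis dot_lmul_matrix inner_commute transpose_matrix_vector)

lemma mat_sum:
  fixes M :: "real^'n^'m"
  shows "M *v (\<Sum>b\<in>B. f b *\<^sub>R g b) = (\<Sum>b\<in>B. f b *\<^sub>R (M *v g b))"
proof -
  have "linear (\<lambda>x. M *v x)" by simp
  then show ?thesis by (simp add: linear_sum o_def matrix_vector_mult_scaleR)
qed

lemma nuc_formula:
  fixes A :: "real^'b^'s"
  assumes B: "onb B" and eig: "\<forall>b\<in>B. \<exists>l. transpose A *v (A *v b) = l *\<^sub>R b"
  shows "nuclear_norm A = (\<Sum>b\<in>B. norm (A *v b))"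
proof -
  define M where "M = transpose A ** A"
  have Mv: "M *v x = transpose A *v (A *v x)" for x by (simp only: M_def matrix_vector_mul_assoc)
  define s where "s b = norm (A *v b)" for b
  have s0: "s b \<ge> 0" for b unfolding s_def by simp
  have Mb: "M *v b = (s b)^2 *\<^sub>R b" if bB: "b \<in> B" for b
  proof -
    obtain l where l: "transpose A *v (A *v b) = l *\<^sub>R b" using eig bB by blast
    have bb: "b \<bullet> b = 1" using onb_inner[OF B bB bB] by simp
    have "l = b \<bullet> (transpose A *v (A *v b))" using l bb by simp
    also have "\<dots> = (A *v b) \<bullet> (A *v b)" by (rule tA_inner)
    also have "\<dots> = (s b)^2" unfolding s_def by (simp add: power2_norm_eq_inner)
    finally show ?thesis using l Mv by simp
  qed
  define P :: "real^'b^'b" where "P = (\<chi> i j. \<Sum>b\<in>B. s b * b$i * b$j)"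
  have Pv: "P *v x = (\<Sum>b\<in>B. (s b * (b \<bullet> x)) *\<^sub>R b)" for x
  proof -
    have "(P *v x)$i = (\<Sum>b\<in>B. (s b * (b \<bullet> x)) *\<^sub>R b)$i" for i
    proof -
      have "(P *v x)$i = (\<Sum>j\<in>UNIV. \<Sum>b\<in>B. s b * b$i * b$j * x$j)"
        unfolding P_def matrix_vector_mult_def by (simp add: sum_distrib_right)
      also have "\<dots> = (\<Sum>b\<in>B. \<Sum>j\<in>UNIV. s b * b$i * b$j * x$j)" by (rule sum.swap)
      also have "\<dots> = (\<Sum>b\<in>B. (s b * (b \<bullet> x)) * b$i)"
        unfolding inner_vec_def by (simp add: sum_distrib_left sum_distrib_right mult_ac)
      also have "\<dots> = (\<Sum>b\<in>B. (s b * (b \<bullet> x)) *\<^sub>R b)$i" by (simp add: sum_component)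
      finally show ?thesis .
    qed
    then show ?thesis by (simp add: vec_eq_iff)
  qed
  have symP: "transpose P = P" unfolding P_def transpose_def by (simp add: vec_eq_iff mult_ac)
  have bP: "b \<bullet> (P *v x) = s b * (b \<bullet> x)" if "b \<in> B" for b x
    using onb_coeff[OF B that] Pv by simp
  have psdP: "psd P" unfolding psd_def
  proof (intro conjI allI symP)
    fix x :: "real^'b"
    have "x \<bullet> (P *v x) = (\<Sum>b\<in>B. s b * ((b \<bullet> x) * (b \<bullet> x)))"
      unfolding Pv by (simp add: inner_sum_right inner_commute mult_ac)
    also have "\<dots> \<ge> 0" by (rule sum_nonneg, rule mult_nonneg_nonneg[OF s0 zero_le_square])
    finally show "0 \<le> x \<bullet> (P *v x)" .
  qed
  have Mx: "M *v x = (\<Sum>b\<in>B. ((s b)^2 * (b \<bullet> x)) *\<^sub>R b)" for x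
  proof -
    have "M *v x = M *v (\<Sum>b\<in>B. (b \<bullet> x) *\<^sub>R b)" using onb_expand[OF B, of x] by (simp only:)
    also have "\<dots> = (\<Sum>b\<in>B. (b \<bullet> x) *\<^sub>R (M *v b))" by (rule mat_sum)
    also have "\<dots> = (\<Sum>b\<in>B. ((s b)^2 * (b \<bullet> x)) *\<^sub>R b)"
      by (rule sum.cong) (simp_all add: Mb)
    finally show ?thesis .
  qed
  have PP: "P ** P = M"
  proof (subst matrix_eq, intro allI)
    fix x
    have "(P ** P) *v x = P *v (P *v x)" by (simp add: matrix_vector_mul_assoc)
    also have "\<dots> = (\<Sum>b\<in>B. (s b * (s b * (b \<bullet> x))) *\<^sub>R b)"
      unfolding Pv[of "P *v x"] by (rule sum.cong) (simp_all add: bP)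
    also have "\<dots> = M *v x" unfolding Mx by (simp add: power2_eq_square mult_ac)
    finally show "(P ** P) *v x = M *v x" .
  qed
  have uniq: "Q = P" if Q: "psd Q" "Q ** Q = M" for Q
  proof -
    have symQ: "transpose Q = Q" and Qpos: "\<And>x. 0 \<le> x \<bullet> (Q *v x)" using Q(1) unfolding psd_def by auto
    have Qb: "Q *v b = s b *\<^sub>R b" if bB: "b \<in> B" for b
    proof -
      have QQ: "Q *v (Q *v b) = (s b)^2 *\<^sub>R b"
        using Mb[OF bB] Q(2) by (simp add: matrix_vector_mul_assoc)
      define w where "w = Q *v b - s b *\<^sub>R b"
      have "Q *v w + s b *\<^sub>R w = 0"
        unfolding w_def by (simp add: matrix_vector_mult_diff_distrib matrix_vector_mult_scaleR QQ
            algebra_simps power2_eq_square)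
      then have "w \<bullet> (Q *v w + s b *\<^sub>R w) = 0" by simp
      then have e: "w \<bullet> (Q *v w) + s b * (w \<bullet> w) = 0" by (simp add: inner_add_right)
      show ?thesis
      proof (cases "s b = 0")
        case True
        then have "Q *v (Q *v b) = 0" using QQ by simp
        then have "(Q *v b) \<bullet> (Q *v b) = 0" using sym_inner[OF symQ, of b "Q *v b"] by simp
        then show ?thesis using True by simp
      next
        case False
        then have "s b > 0" using s0[of b] by simp
        moreover have "w \<bullet> (Q *v w) \<ge> 0" by (rule Qpos)
        ultimately have "w \<bullet> w \<le> 0" using e
          by (smt (verit, ccfv_SIG) mult_pos_pos inner_ge_zero)
        then have "w = 0" by (metis inner_eq_zero_iff inner_ge_zero order_antisym)
        then show ?thesis unfolding w_def by simp
      qed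
    qed
    show ?thesis
    proof (subst matrix_eq, intro allI)
      fix x
      have "Q *v x = Q *v (\<Sum>b\<in>B. (b \<bullet> x) *\<^sub>R b)" using onb_expand[OF B, of x] by (simp only:)
      also have "\<dots> = (\<Sum>b\<in>B. (b \<bullet> x) *\<^sub>R (Q *v b))" by (rule mat_sum)
      also have "\<dots> = (\<Sum>b\<in>B. (s b * (b \<bullet> x)) *\<^sub>R b)"
        by (rule sum.cong) (simp_all add: Qb mult_ac)
      also have "\<dots> = P *v x" by (simp add: Pv)
      finally show "Q *v x = P *v x" .
    qed
  qed
  have "(THE P. psd P \<and> P ** P = transpose A ** A) = P"
  proof (rule the_equality)
    show "psd P \<and> P ** P = transpose A ** A" using psdP PP unfolding M_def by blast
    show "\<And>Q. psd Q \<and> Q ** Q = transpose A ** A \<Longrightarrow> Q = P" using uniq unfolding M_def by blast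
  qed
  then have "nuclear_norm A = trace P" unfolding nuclear_norm_def by simp
  also have "\<dots> = (\<Sum>b\<in>B. b \<bullet> (P *v b))" by (rule onb_trace[OF B])
  also have "\<dots> = (\<Sum>b\<in>B. s b)"
    by (rule sum.cong) (simp_all add: bP onb_inner[OF B])
  finally show ?thesis unfolding s_def .
qed

lemma nuc_basis:
  fixes A :: "real^'b^'s"
  shows "\<exists>B. onb B \<and> (\<forall>b\<in>B. \<exists>l. transpose A *v (A *v b) = l *\<^sub>R b)"
proof -
  have "transpose (transpose A ** A) = transpose A ** A" by (simp add: matrix_transpose_mul)
  from spectral[OF this] obtain B where "onb B" "\<forall>b\<in>B. \<exists>l. (transpose A ** A) *v b = l *\<^sub>R b" by blast
  then show ?thesis by (simp only: matrix_vector_mul_assoc) blast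
qed

lemma nuc_nonneg: "nuclear_norm A \<ge> 0"
proof -
  obtain B where "onb B" "\<forall>b\<in>B. \<exists>l. transpose A *v (A *v b) = l *\<^sub>R b" using nuc_basis by blast
  then have "nuclear_norm A = (\<Sum>b\<in>B. norm (A *v b))" using nuc_formula by blast
  then show ?thesis by (simp add: sum_nonneg)
qed

lemma nuc_scale:
  fixes A :: "real^'b^'s"
  shows "nuclear_norm (c *\<^sub>R A) = \<bar>c\<bar> * nuclear_norm A"
proof -
  obtain B where B: "onb B" "\<forall>b\<in>B. \<exists>l. transpose A *v (A *v b) = l *\<^sub>R b" using nuc_basis by blast
  have sc: "(c *\<^sub>R A) *v x = c *\<^sub>R (A *v x)" for x :: "real^'b"
    by (simp add: scaleR_matrix_vector_assoc)
  have sct: "transpose (c *\<^sub>R A) *v y = c *\<^sub>R (transpose A *v y)" for y :: "real^'s"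
    by (simp only: transpose_scalar scaleR_matrix_vector_assoc)
  have "\<forall>b\<in>B. \<exists>l. transpose (c *\<^sub>R A) *v ((c *\<^sub>R A) *v b) = l *\<^sub>R b"
  proof
    fix b assume "b \<in> B"
    then obtain l where l: "transpose A *v (A *v b) = l *\<^sub>R b" using B(2) by blast
    have "transpose (c *\<^sub>R A) *v ((c *\<^sub>R A) *v b) = (c * c * l) *\<^sub>R b"
      unfolding sc sct by (simp add: matrix_vector_mult_scaleR l del: transpose_matrix_vector)
    then show "\<exists>l. transpose (c *\<^sub>R A) *v ((c *\<^sub>R A) *v b) = l *\<^sub>R b" by blast
  qed
  then have "nuclear_norm (c *\<^sub>R A) = (\<Sum>b\<in>B. norm ((c *\<^sub>R A) *v b))" using nuc_formula B(1) by blast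
  also have "\<dots> = \<bar>c\<bar> * (\<Sum>b\<in>B. norm (A *v b))" by (simp add: sc sum_distrib_left)
  also have "\<dots> = \<bar>c\<bar> * nuclear_norm A" using nuc_formula[OF B(1) B(2)] by simp
  finally show ?thesis .
qed

lemma orth_sum_norm:
  fixes u :: "'x \<Rightarrow> 'v::real_inner"
  assumes fin: "finite E" and orth: "\<And>e e'. e \<in> E \<Longrightarrow> e' \<in> E \<Longrightarrow> e \<noteq> e' \<Longrightarrow> u e \<bullet> u e' = 0"
  shows "(\<Sum>e\<in>E. c e *\<^sub>R u e) \<bullet> (\<Sum>e\<in>E. c e *\<^sub>R u e) = (\<Sum>e\<in>E. (c e)^2 * (u e \<bullet> u e))"
proof -
  have "(\<Sum>e\<in>E. c e *\<^sub>R u e) \<bullet> (\<Sum>e\<in>E. c e *\<^sub>R u e) = (\<Sum>e\<in>E. \<Sum>e'\<in>E. c e * c e' * (u e \<bullet> u e'))"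
    by (simp add: inner_sum_left inner_sum_right sum_distrib_left mult_ac inner_commute)
  also have "\<dots> = (\<Sum>e\<in>E. \<Sum>e'\<in>E. if e' = e then c e * c e * (u e \<bullet> u e) else 0)"
    by (intro sum.cong refl) (auto simp: orth)
  also have "\<dots> = (\<Sum>e\<in>E. (c e)^2 * (u e \<bullet> u e))" using fin by (simp add: power2_eq_square)
  finally show ?thesis .
qed

lemma nuc_bound:
  fixes A :: "real^'b^'s"
  assumes E: "onb E" and orth: "\<And>e e'. e \<in> E \<Longrightarrow> e' \<in> E \<Longrightarrow> e \<noteq> e' \<Longrightarrow> u e \<bullet> u e' = 0"
    and un: "\<And>e. e \<in> E \<Longrightarrow> norm (u e) \<le> 1"
  shows "(\<Sum>e\<in>E. u e \<bullet> (A *v e)) \<le> nuclear_norm A"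
proof -
  obtain R where R: "onb R" "\<forall>b\<in>R. \<exists>l. transpose A *v (A *v b) = l *\<^sub>R b" using nuc_basis by blast
  have finE: "finite E" using E unfolding onb_def by simp
  have finR: "finite R" using R unfolding onb_def by simp
  have "(\<Sum>e\<in>E. u e \<bullet> (A *v e)) = (\<Sum>e\<in>E. u e \<bullet> (A *v (\<Sum>r\<in>R. (r \<bullet> e) *\<^sub>R r)))"
    using onb_expand[OF R(1)] by (metis (no_types, lifting))
  also have "\<dots> = (\<Sum>e\<in>E. \<Sum>r\<in>R. (r \<bullet> e) * (u e \<bullet> (A *v r)))"
    by (simp add: mat_sum inner_sum_right)
  also have "\<dots> = (\<Sum>r\<in>R. (\<Sum>e\<in>E. (r \<bullet> e) *\<^sub>R u e) \<bullet> (A *v r))"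
    by (subst sum.swap) (simp add: inner_sum_left)
  also have "\<dots> \<le> (\<Sum>r\<in>R. norm (A *v r))"
  proof (rule sum_mono)
    fix r assume rR: "r \<in> R"
    let ?v = "\<Sum>e\<in>E. (r \<bullet> e) *\<^sub>R u e"
    have "?v \<bullet> ?v = (\<Sum>e\<in>E. (r \<bullet> e)^2 * (u e \<bullet> u e))" by (rule orth_sum_norm[OF finE orth])
    also have "\<dots> \<le> (\<Sum>e\<in>E. (r \<bullet> e)^2)"
    proof (rule sum_mono)
      fix e assume "e \<in> E"
      have "u e \<bullet> u e \<le> 1" using un[OF \<open>e \<in> E\<close>]
        by (metis norm_le_zero_iff one_le_numeral power2_norm_eq_inner norm_ge_zero power_le_one)
      then show "(r \<bullet> e)^2 * (u e \<bullet> u e) \<le> (r \<bullet> e)^2"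
        by (simp add: mult_left_le)
    qed
    also have "\<dots> = r \<bullet> r" using onb_parseval[OF E, of r r] by (simp add: power2_eq_square inner_commute)
    also have "\<dots> = 1" using onb_inner[OF R(1) rR rR] by simp
    finally have "norm ?v \<le> 1" by (simp add: norm_eq_sqrt_inner)
    have "?v \<bullet> (A *v r) \<le> norm ?v * norm (A *v r)" by (rule norm_cauchy_schwarz)
    also have "\<dots> \<le> 1 * norm (A *v r)" using \<open>norm ?v \<le> 1\<close> by (intro mult_right_mono) auto
    finally have "?v \<bullet> (A *v r) \<le> 1 * norm (A *v r)" .
    then show "?v \<bullet> (A *v r) \<le> norm (A *v r)" by simp
  qed
  also have "\<dots> = nuclear_norm A" using nuc_formula[OF R(1) R(2)] by simp
  finally show ?thesis .
qed

lemma nuc_triangle: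
  fixes A B :: "real^'b^'s"
  shows "nuclear_norm (A + B) \<le> nuclear_norm A + nuclear_norm B"
proof -
  define C where "C = A + B"
  obtain E where E: "onb E" "\<forall>b\<in>E. \<exists>l. transpose C *v (C *v b) = l *\<^sub>R b" using nuc_basis by blast
  define u where "u e = (1 / norm (C *v e)) *\<^sub>R (C *v e)" for e
  have un: "norm (u e) \<le> 1" for e unfolding u_def by (cases "C *v e = 0") auto
  have orth: "u e \<bullet> u e' = 0" if ee: "e \<in> E" "e' \<in> E" "e \<noteq> e'" for e e'
  proof -
    obtain l where l: "transpose C *v (C *v e') = l *\<^sub>R e'" using E(2) ee(2) by blast
    have "(C *v e) \<bullet> (C *v e') = e \<bullet> (transpose C *v (C *v e'))" by (rule tA_inner[symmetric])
    also have "\<dots> = 0" using l onb_inner[OF E(1) ee(1,2)] ee(3) by (simp del: transpose_matrix_vector)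
    finally show ?thesis unfolding u_def by simp
  qed
  have ue: "u e \<bullet> (C *v e) = norm (C *v e)" for e
    unfolding u_def by (cases "C *v e = 0") (auto simp: power2_norm_eq_inner[symmetric] power2_eq_square)
  have "nuclear_norm C = (\<Sum>e\<in>E. norm (C *v e))" using nuc_formula E by blast
  also have "\<dots> = (\<Sum>e\<in>E. u e \<bullet> (C *v e))" by (simp add: ue)
  also have "\<dots> = (\<Sum>e\<in>E. u e \<bullet> (A *v e)) + (\<Sum>e\<in>E. u e \<bullet> (B *v e))"
    unfolding C_def by (simp add: matrix_vector_mult_add_rdistrib inner_add_right sum.distrib)
  also have "\<dots> \<le> nuclear_norm A + nuclear_norm B"
    by (intro add_mono nuc_bound[OF E(1)] orth un) auto
  finally show ?thesis unfolding C_def .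
qed

lemma nuc_convex: "convex_on UNIV (nuclear_norm :: real^'b^'s \<Rightarrow> real)"
proof (rule convex_onI)
  fix t :: real and x y :: "real^'b^'s"
  assume t: "t > 0" "t < 1"
  have "nuclear_norm ((1 - t) *\<^sub>R x + t *\<^sub>R y) \<le> nuclear_norm ((1 - t) *\<^sub>R x) + nuclear_norm (t *\<^sub>R y)"
    by (rule nuc_triangle)
  also have "\<dots> = (1 - t) * nuclear_norm x + t * nuclear_norm y" using t by (simp add: nuc_scale)
  finally show "nuclear_norm ((1 - t) *\<^sub>R x + t *\<^sub>R y) \<le> (1 - t) * nuclear_norm x + t * nuclear_norm y" .
qed simp

lemma le_eps_aux:
  fixes A B K :: real
  assumes h: "\<And>t. 0 < t \<Longrightarrow> t < 1 \<Longrightarrow> A \<le> B + t * K" and K: "K \<ge> 0"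
  shows "A \<le> B"
proof (rule ccontr)
  assume "\<not> A \<le> B"
  then have d: "A - B > 0" by simp
  define t where "t = min (1/2) ((A - B) / (K + 1))"
  have t0: "t > 0" using d K unfolding t_def by simp
  have t1: "t < 1" unfolding t_def by simp
  have "t * K \<le> ((A - B) / (K + 1)) * K" unfolding t_def using K by (intro mult_right_mono) auto
  also have "\<dots> < A - B" using d K by (simp add: field_simps)
  finally show False using h[OF t0 t1] by simp
qed

lemma prox_vi:
  fixes x c z :: "'a::real_inner"
  assumes m: "m > 0" and cv: "convex_on UNIV h"
    and opt: "\<And>z. h x + m/2 * (norm (x - c))\<^sup>2 \<le> h z + m/2 * (norm (z - c))\<^sup>2"
  shows "h z \<ge> h x + (m *\<^sub>R (c - x)) \<bullet> (z - x)"
proof -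
  define d where "d = z - x"
  have "h x \<le> (h z + m * ((x - c) \<bullet> d)) + t * (m/2 * (d \<bullet> d))" if t: "0 < t" "t < 1" for t
  proof -
    have zt: "(1 - t) *\<^sub>R x + t *\<^sub>R z = x + t *\<^sub>R d" unfolding d_def by (simp add: algebra_simps)
    have hc: "h ((1 - t) *\<^sub>R x + t *\<^sub>R z) \<le> (1 - t) * h x + t * h z"
      using convex_onD[OF cv, of t x z] t by simp
    have nn: "(norm (x + t *\<^sub>R d - c))\<^sup>2 = (norm (x - c))\<^sup>2 + 2 * t * ((x - c) \<bullet> d) + t^2 * (d \<bullet> d)"
    proof -
      have "x + t *\<^sub>R d - c = (x - c) + t *\<^sub>R d" by simp
      then show ?thesis unfolding power2_norm_eq_inner
        by (simp add: inner_add_left inner_add_right inner_commute power2_eq_square algebra_simps)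
    qed
    have "h x + m/2 * (norm (x - c))\<^sup>2 \<le> h (x + t *\<^sub>R d) + m/2 * (norm (x + t *\<^sub>R d - c))\<^sup>2"
      by (rule opt)
    then have "h x + m/2 * (norm (x - c))\<^sup>2 \<le> (1 - t) * h x + t * h z + m/2 * ((norm (x - c))\<^sup>2 + 2 * t * ((x - c) \<bullet> d) + t^2 * (d \<bullet> d))"
      using hc zt nn by simp
    then have "t * h x \<le> t * (h z + m * ((x - c) \<bullet> d) + t * (m/2 * (d \<bullet> d)))"
      by (simp add: algebra_simps power2_eq_square)
    then show ?thesis using t by simp
  qed
  then have "h x \<le> h z + m * ((x - c) \<bullet> d)"
    by (rule le_eps_aux) (use m in \<open>auto intro!: mult_nonneg_nonneg\<close>)
  then show ?thesis unfolding d_def by (simp add: inner_diff_left algebra_simps)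
qed

lemma admm_step:
  fixes H L' S S' Y Y' Ls Ss Ys :: "'a::real_inner"
  assumes mu: "mu > 0"
   and VL: "f Ls \<ge> f L' + (Y + mu *\<^sub>R (H - L' - S)) \<bullet> (Ls - L')"
   and VS: "g Ss \<ge> g S' + Y' \<bullet> (Ss - S')"
   and VSa: "g S \<ge> g S' + Y' \<bullet> (S - S')"
   and VS0: "g S' \<ge> g S + Y \<bullet> (S' - S)"
   and K1: "f L' \<ge> f Ls + Ys \<bullet> (L' - Ls)"
   and K2: "g S' \<ge> g Ss + Ys \<bullet> (S' - Ss)"
   and KH: "Ls + Ss = H"
   and Yd: "Y' = Y + mu *\<^sub>R (H - L' - S')"
  shows "mu * (norm (S' - Ss))\<^sup>2 + (norm (Y' - Ys))\<^sup>2 / mu \<le> mu * (norm (S - Ss))\<^sup>2 + (norm (Y - Ys))\<^sup>2 / mu"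
proof -
  define a where "a = S' - Ss"
  define b where "b = S - Ss"
  define p where "p = Y' - Ys"
  define q where "q = Y - Ys"
  define im where "im = 1 / mu"
  have im: "im > 0" "mu * im = 1" unfolding im_def using mu by auto
  have e1: "(Y + mu *\<^sub>R (H - L' - S)) - Ys = p + mu *\<^sub>R (a - b)"
    unfolding p_def a_def b_def Yd by (simp add: algebra_simps)
  have hh: "H - L' - S' = im *\<^sub>R (p - q)"
    unfolding p_def q_def Yd im_def using mu by (simp add: algebra_simps)
  have e2: "L' - Ls = - a - im *\<^sub>R (p - q)"
  proof -
    have "L' = H - S' - im *\<^sub>R (p - q)" using hh by (simp add: algebra_simps)
    then show ?thesis unfolding a_def using KH by (simp add: algebra_simps)
  qed
  have i1: "(p + mu *\<^sub>R (a - b)) \<bullet> (- a - im *\<^sub>R (p - q)) \<ge> 0"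
  proof -
    have "((Y + mu *\<^sub>R (H - L' - S)) - Ys) \<bullet> (L' - Ls) \<ge> 0"
      using VL K1 by (simp add: inner_diff_left inner_diff_right algebra_simps)
    then show ?thesis using e1 e2 by simp
  qed
  have i2: "p \<bullet> a \<ge> 0" unfolding p_def a_def using VS K2
    by (simp add: inner_diff_left inner_diff_right algebra_simps)
  have i3: "(p - q) \<bullet> (a - b) \<ge> 0"
  proof -
    have eq: "(p - q) \<bullet> (a - b) = (Y' - Y) \<bullet> (S' - S)" unfolding p_def q_def a_def b_def by simp
    have "(Y' - Y) \<bullet> (S' - S) \<ge> 0" using VSa VS0 by (simp add: inner_diff_left inner_diff_right algebra_simps)
    then show ?thesis unfolding eq .
  qed
  have x1: "- (p \<bullet> a) - im * (p \<bullet> p) + im * (p \<bullet> q) - mu * (a \<bullet> a) + mu * (a \<bullet> b)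
      - (a \<bullet> p) + (a \<bullet> q) + (b \<bullet> p) - (b \<bullet> q) \<ge> 0"
  proof -
    have imx: "\<And>x. im * (mu * x) = x" by (metis im(2) mult.assoc mult.commute mult_1)
    show ?thesis
    using i1 im by (simp add: imx inner_add_left inner_add_right inner_diff_left inner_diff_right
        algebra_simps inner_commute)
  qed
  have x3: "p \<bullet> a - p \<bullet> b - q \<bullet> a + q \<bullet> b \<ge> 0"
    using i3 by (simp add: inner_diff_left inner_diff_right algebra_simps)
  have pq: "2 * (p \<bullet> q) \<le> p \<bullet> p + q \<bullet> q"
  proof -
    have "0 \<le> (p - q) \<bullet> (p - q)" by simp
    then show ?thesis by (simp add: inner_diff_left inner_diff_right inner_commute)
  qed
  have ab: "2 * (a \<bullet> b) \<le> a \<bullet> a + b \<bullet> b"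
  proof -
    have "0 \<le> (a - b) \<bullet> (a - b)" by simp
    then show ?thesis by (simp add: inner_diff_left inner_diff_right inner_commute)
  qed
  have pq': "im * (2 * (p \<bullet> q)) \<le> im * (p \<bullet> p + q \<bullet> q)" using pq im by (intro mult_left_mono) auto
  have ab': "mu * (2 * (a \<bullet> b)) \<le> mu * (a \<bullet> a + b \<bullet> b)" using ab mu by (intro mult_left_mono) auto
  have comm: "a \<bullet> p = p \<bullet> a" "a \<bullet> q = q \<bullet> a" "b \<bullet> p = p \<bullet> b" "b \<bullet> q = q \<bullet> b" by (simp_all add: inner_commute)
  have "mu * (a \<bullet> a) + im * (p \<bullet> p) \<le> mu * (b \<bullet> b) + im * (q \<bullet> q)"
    using x1 x3 i2 pq' ab' comm by (simp add: algebra_simps)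
  then show ?thesis unfolding a_def b_def p_def q_def im_def power2_norm_eq_inner by simp
qed

lemma kkt_exists:
  fixes f g :: "'a::euclidean_space \<Rightarrow> real"
  assumes cf: "convex_on UNIV f" and cg: "convex_on UNIV g"
    and minL: "\<And>L. f Ls + g (H - Ls) \<le> f L + g (H - L)"
  shows "\<exists>Ys. (\<forall>X. f X \<ge> f Ls + Ys \<bullet> (X - Ls)) \<and> (\<forall>X. g X \<ge> g (H - Ls) + Ys \<bullet> (X - (H - Ls)))"
proof -
  define Ss where "Ss = H - Ls"
  define p where "p = f Ls + g Ss"
  have p_le: "p \<le> f L + g S" if "L + S = H" for L S
  proof -
    have "S = H - L" using that by (simp add: algebra_simps)
    then show ?thesis unfolding p_def Ss_def using minL[of L] by simp
  qed
  define A where "A = {z. \<exists>L S t. z = (L + S - H, t) \<and> t > f L + g S}"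
  define T where "T = {(0::'a, p)}"
  have cA: "convex A"
  proof (rule convexI)
    fix x y and u v :: real
    assume x: "x \<in> A" and y: "y \<in> A" and u: "0 \<le> u" and v: "0 \<le> v" and uv: "u + v = 1"
    obtain L1 S1 t1 where 1: "x = (L1 + S1 - H, t1)" "t1 > f L1 + g S1" using x unfolding A_def by blast
    obtain L2 S2 t2 where 2: "y = (L2 + S2 - H, t2)" "t2 > f L2 + g S2" using y unfolding A_def by blast
    have u1: "u = 1 - v" using uv by simp
    have v1: "v \<le> 1" using u uv by simp
    define L where "L = u *\<^sub>R L1 + v *\<^sub>R L2"
    define S where "S = u *\<^sub>R S1 + v *\<^sub>R S2"
    have fL: "f L \<le> u * f L1 + v * f L2"
      using convex_onD[OF cf, of v L1 L2] v v1 unfolding L_def u1 by simp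
    have gS: "g S \<le> u * g S1 + v * g S2"
      using convex_onD[OF cg, of v S1 S2] v v1 unfolding S_def u1 by simp
    have tt: "u * t1 + v * t2 > u * (f L1 + g S1) + v * (f L2 + g S2)"
    proof (cases "u = 0")
      case True then show ?thesis using uv 2 by simp
    next
      case False
      then have "u > 0" using u by simp
      then have "u * t1 > u * (f L1 + g S1)" using 1 by simp
      moreover have "v * t2 \<ge> v * (f L2 + g S2)" using 2 v by (intro mult_left_mono) auto
      ultimately show ?thesis by simp
    qed
    have "u *\<^sub>R x + v *\<^sub>R y = (L + S - H, u * t1 + v * t2)"
      unfolding 1 2 L_def S_def u1 by (simp add: algebra_simps)
    moreover have "u * t1 + v * t2 > f L + g S" using fL gS tt by (simp add: algebra_simps)
    ultimately show "u *\<^sub>R x + v *\<^sub>R y \<in> A" unfolding A_def by blast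
  qed
  have cT: "convex T" unfolding T_def by simp
  have neA: "A \<noteq> {}" unfolding A_def
  proof -
    have "(Ls + Ss - H, f Ls + g Ss + 1) \<in> {z. \<exists>L S t. z = (L + S - H, t) \<and> t > f L + g S}"
      by (intro CollectI exI[of _ Ls] exI[of _ Ss] exI[of _ "f Ls + g Ss + 1"]) simp
    then show "{z. \<exists>L S t. z = (L + S - H, t) \<and> t > f L + g S} \<noteq> {}" by blast
  qed
  have neT: "T \<noteq> {}" unfolding T_def by simp
  have disj: "A \<inter> T = {}"
  proof -
    have "(0, p) \<notin> A"
    proof
      assume "(0, p) \<in> A"
      then obtain L S t where "(0::'a, p) = (L + S - H, t)" "t > f L + g S" unfolding A_def by blast
      then have "L + S = H" "p > f L + g S" by (auto simp: algebra_simps)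
      then show False using p_le by fastforce
    qed
    then show ?thesis unfolding T_def by auto
  qed
  obtain a b where ab: "a \<noteq> 0" "\<forall>x\<in>A. a \<bullet> x \<le> b" "\<forall>x\<in>T. a \<bullet> x \<ge> b"
    using separating_hyperplane_sets[OF cA cT neA neT disj] by blast
  obtain Z c where ac: "a = (Z, c)" by (cases a)
  have hA: "Z \<bullet> (L + S - H) + c * t \<le> b" if "t > f L + g S" for L S t
  proof -
    have "(L + S - H, t) \<in> A" unfolding A_def using that by blast
    then show ?thesis using ab(2) ac by auto
  qed
  have hT: "b \<le> c * p" using ab(3) ac unfolding T_def by simp
  have cneg: "c < 0"
  proof (rule ccontr)
    assume "\<not> c < 0"
    then have c0: "c \<ge> 0" by simp
    show False
    proof (cases "c = 0")
      case True
      then have Z0: "Z \<noteq> 0" using ab(1) ac by (auto simp: zero_prod_def)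
      define s where "s = (\<bar>b\<bar> + 1) / (Z \<bullet> Z)"
      have "Z \<bullet> ((H + s *\<^sub>R Z) + 0 - H) + c * (f (H + s *\<^sub>R Z) + g 0 + 1) \<le> b" by (rule hA) simp
      then have "s * (Z \<bullet> Z) \<le> b" using True by simp
      moreover have "s * (Z \<bullet> Z) = \<bar>b\<bar> + 1" unfolding s_def using Z0 by simp
      ultimately show False by simp
    next
      case False
      then have cp: "c > 0" using c0 by simp
      have "Z \<bullet> (Ls + Ss - H) + c * (p + 1) \<le> b" by (rule hA) (simp add: p_def)
      then have "c * (p + 1) \<le> c * p" using hT unfolding Ss_def by simp
      then show False using cp by (simp add: algebra_simps)
    qed
  qed
  define Ys where "Ys = (1 / (- c)) *\<^sub>R Z"
  have key: "p + Ys \<bullet> (L + S - H) \<le> f L + g S" for L S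
  proof (rule field_le_epsilon)
    fix e :: real assume e: "e > 0"
    have h: "Z \<bullet> (L + S - H) + c * (f L + g S + e) \<le> c * p" using hA[of L S "f L + g S + e"] e hT by simp
    have mc: "- c > 0" using cneg by simp
    have "(Z \<bullet> (L + S - H)) / (- c) \<le> (f L + g S + e) - p"
      unfolding pos_divide_le_eq[OF mc] using h by (simp add: algebra_simps)
    then have "(Z \<bullet> (L + S - H)) / (- c) - (f L + g S + e) \<le> - p" by simp
    moreover have "Ys \<bullet> (L + S - H) = (Z \<bullet> (L + S - H)) / (- c)" unfolding Ys_def by simp
    ultimately show "p + Ys \<bullet> (L + S - H) \<le> f L + g S + e" by simp
  qed
  show ?thesis
  proof (intro exI conjI allI)
    fix X
    show "f X \<ge> f Ls + Ys \<bullet> (X - Ls)" using key[of X Ss] unfolding p_def Ss_def by (simp add: algebra_simps)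
    show "g X \<ge> g (H - Ls) + Ys \<bullet> (X - (H - Ls))" using key[of Ls X] unfolding p_def Ss_def by (simp add: algebra_simps)
  qed
qed

lemma frob_eq: "frob_norm A = norm A"
proof -
  have "norm A = sqrt (\<Sum>i\<in>UNIV. (norm (A $ i))\<^sup>2)" unfolding norm_vec_def L2_set_def ..
  also have "\<dots> = sqrt (\<Sum>i\<in>UNIV. \<Sum>j\<in>UNIV. (A $ i $ j)\<^sup>2)"
    unfolding norm_vec_def L2_set_def by (simp add: sum_nonneg)
  finally show ?thesis unfolding frob_norm_def by simp
qed

lemma l1_ge_norm: "norm A \<le> l1_norm A"
proof -
  have "norm A \<le> (\<Sum>i\<in>UNIV. norm (A $ i))" unfolding norm_vec_def by (rule L2_set_le_sum) simp
  also have "\<dots> \<le> (\<Sum>i\<in>UNIV. \<Sum>j\<in>UNIV. \<bar>A $ i $ j\<bar>)"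
  proof (rule sum_mono)
    fix i
    show "norm (A $ i) \<le> (\<Sum>j\<in>UNIV. \<bar>A $ i $ j\<bar>)" unfolding norm_vec_def
      by (rule order_trans[OF L2_set_le_sum]) simp_all
  qed
  finally show ?thesis unfolding l1_norm_def .
qed

lemma l1_nonneg: "l1_norm A \<ge> 0" unfolding l1_norm_def by (simp add: sum_nonneg)

lemma l1_zero: "l1_norm 0 = 0" unfolding l1_norm_def by simp

lemma l1_convex: "convex_on UNIV (l1_norm :: real^'b^'s \<Rightarrow> real)"
proof (rule convex_onI)
  fix t :: real and x y :: "real^'b^'s"
  assume t: "t > 0" "t < 1"
  have "\<bar>(1 - t) * a + t * b\<bar> \<le> (1 - t) * \<bar>a\<bar> + t * \<bar>b\<bar>" for a b :: real
  proof -
    have "\<bar>(1 - t) * a + t * b\<bar> \<le> \<bar>(1 - t) * a\<bar> + \<bar>t * b\<bar>" by (rule abs_triangle_ineq)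
    also have "\<dots> = (1 - t) * \<bar>a\<bar> + t * \<bar>b\<bar>" using t by (simp add: abs_mult)
    finally show ?thesis .
  qed
  then show "l1_norm ((1 - t) *\<^sub>R x + t *\<^sub>R y) \<le> (1 - t) * l1_norm x + t * l1_norm y"
    unfolding l1_norm_def by (simp add: sum_distrib_left sum.distrib[symmetric] sum_mono)
qed simp

lemma sqn_convex: "convex_on UNIV (\<lambda>X::'a::real_inner. (norm (X - c))\<^sup>2)"
proof (rule convex_onI)
  fix t :: real and x y :: 'a
  assume t: "t > 0" "t < 1"
  define a where "a = x - c"
  define b where "b = y - c"
  have e: "(1 - t) *\<^sub>R x + t *\<^sub>R y - c = (1 - t) *\<^sub>R a + t *\<^sub>R b" unfolding a_def b_def by (simp add: algebra_simps)
  have "(1 - t) * (a \<bullet> a) + t * (b \<bullet> b) - ((1 - t) *\<^sub>R a + t *\<^sub>R b) \<bullet> ((1 - t) *\<^sub>R a + t *\<^sub>R b)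
      = t * (1 - t) * ((a - b) \<bullet> (a - b))"
    by (simp add: inner_add_left inner_add_right inner_diff_left inner_diff_right inner_commute algebra_simps power2_eq_square)
  moreover have "t * (1 - t) * ((a - b) \<bullet> (a - b)) \<ge> 0" using t by simp
  ultimately show "(norm ((1 - t) *\<^sub>R x + t *\<^sub>R y - c))\<^sup>2 \<le> (1 - t) * (norm (x - c))\<^sup>2 + t * (norm (y - c))\<^sup>2"
    unfolding e power2_norm_eq_inner a_def[symmetric] b_def[symmetric] by simp
qed simp

theorem lemma2:
  fixes H L1 :: "real^'b^'s"
    and lam gam beta mu0 rho mumax :: real
    and L S Y :: "nat \<Rightarrow> real^'b^'s"
    and mu :: "nat \<Rightarrow> real"
    and f g :: "real^'b^'s \<Rightarrow> real"
  assumes "lam > 0" and "gam \<ge> 0" and "mu0 > 0" and "rho > 1" and "mumax \<ge> mu0"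
    and f_def: "\<And>X. f X = nuclear_norm X + gam * (frob_norm (X - beta *\<^sub>R L1))\<^sup>2"
    and g_def: "\<And>X. g X = lam * l1_norm X"
    and S0: "S 0 = 0" and Y0: "Y 0 = 0" and mu_0: "mu 0 = mu0"
    and L_step: "\<And>k X. f (L (Suc k)) + mu k / 2 *
              (frob_norm (L (Suc k) - (H - S k + (1 / mu k) *\<^sub>R Y k)))\<^sup>2
          \<le> f X + mu k / 2 * (frob_norm (X - (H - S k + (1 / mu k) *\<^sub>R Y k)))\<^sup>2"
    and S_step: "\<And>k X. g (S (Suc k)) + mu k / 2 *
              (frob_norm (S (Suc k) - (H - L (Suc k) + (1 / mu k) *\<^sub>R Y k)))\<^sup>2
          \<le> g X + mu k / 2 * (frob_norm (X - (H - L (Suc k) + (1 / mu k) *\<^sub>R Y k)))\<^sup>2"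
    and Y_step: "\<And>k. Y (Suc k) = Y k + mu k *\<^sub>R (H - L (Suc k) - S (Suc k))"
    and mu_step: "\<And>k. mu (Suc k) = min (rho * mu k) mumax"
  shows "bounded (range (\<lambda>k. (L k, S k)))"
proof -
  note lam = assms(1) and gam = assms(2) and mu0 = assms(3) and rho = assms(4) and mumax = assms(5)
  have fd: "f = (\<lambda>X. nuclear_norm X + gam * (norm (X - beta *\<^sub>R L1))\<^sup>2)"
    by (rule ext) (simp add: f_def frob_eq)
  have gd: "g = (\<lambda>X. lam * l1_norm X)" by (rule ext) (simp add: g_def)
  have cf: "convex_on UNIV f" unfolding fd
    by (intro convex_on_add nuc_convex convex_on_cmul sqn_convex gam)
  have cg: "convex_on UNIV g" unfolding gd
    by (intro convex_on_cmul l1_convex) (use lam in simp)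
  have f0: "f X \<ge> 0" for X unfolding fd using nuc_nonneg[of X] gam by simp
  have gn: "g X \<ge> lam * norm X" for X unfolding gd using l1_ge_norm[of X] lam by simp
  have g0: "g X \<ge> 0" for X using gn[of X] lam by (smt (verit) mult_nonneg_nonneg norm_ge_zero)
  have gz: "g 0 = 0" unfolding gd by (simp add: l1_zero)
  have contf: "continuous_on UNIV f" by (rule convex_on_continuous[OF open_UNIV cf])
  have contg: "continuous_on UNIV g" by (rule convex_on_continuous[OF open_UNIV cg])
  define Phi where "Phi L' = f L' + g (H - L')" for L'
  have contPhi: "continuous_on UNIV Phi" unfolding Phi_def
    by (intro continuous_on_add contf continuous_on_compose2[OF contg] continuous_intros) auto
  define R where "R = Phi 0 / lam"
  have R0: "dist H 0 \<le> R"
  proof -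
    have "lam * norm H \<le> Phi 0" unfolding Phi_def using gn[of H] f0[of 0] by simp
    then show ?thesis unfolding R_def using lam by (simp add: pos_le_divide_eq mult.commute)
  qed
  have ne: "cball H R \<noteq> {}" using R0 by (metis empty_iff mem_cball)
  have "\<exists>x\<in>cball H R. \<forall>y\<in>cball H R. Phi x \<le> Phi y"
    by (rule continuous_attains_inf[OF compact_cball ne continuous_on_subset[OF contPhi subset_UNIV]])
  then obtain Ls where LsK: "Ls \<in> cball H R" and Lsmin: "\<forall>y\<in>cball H R. Phi Ls \<le> Phi y" by blast
  have minL: "Phi Ls \<le> Phi L'" for L'
  proof (cases "L' \<in> cball H R")
    case True then show ?thesis using Lsmin by blast
  next
    case False
    then have "norm (H - L') > R" by (simp add: dist_norm)
    then have "lam * norm (H - L') > lam * R" using lam by simp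
    moreover have "lam * R = Phi 0" unfolding R_def using lam by simp
    moreover have "Phi L' \<ge> lam * norm (H - L')" unfolding Phi_def using gn[of "H - L'"] f0[of L'] by simp
    moreover have "Phi Ls \<le> Phi 0" using Lsmin R0 by simp
    ultimately show ?thesis by simp
  qed
  obtain Ys where K1: "\<And>X. f X \<ge> f Ls + Ys \<bullet> (X - Ls)"
    and K2': "\<And>X. g X \<ge> g (H - Ls) + Ys \<bullet> (X - (H - Ls))"
    using kkt_exists[OF cf cg, of Ls H] minL unfolding Phi_def by blast
  define Ss where "Ss = H - Ls"
  have K2: "\<And>X. g X \<ge> g Ss + Ys \<bullet> (X - Ss)" unfolding Ss_def by (rule K2')
  have KH: "Ls + Ss = H" unfolding Ss_def by simp
  have mulow: "mu k \<ge> mu0" for k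
  proof (induction k)
    case 0 then show ?case using mu_0 by simp
  next
    case (Suc k)
    have "rho * mu k \<ge> mu k" using rho Suc mu0 by simp
    then show ?case using Suc mumax mu_step[of k] by simp
  qed
  have mupos: "mu k > 0" for k using mulow[of k] mu0 by simp
  have muhigh: "mu k \<le> mumax" for k
    by (cases k) (use mu_0 mumax mu_step in auto)
  have mumono: "mu k \<le> mu (Suc k)" for k
  proof -
    have "rho * mu k \<ge> mu k" using rho mupos[of k] by simp
    then show ?thesis using muhigh[of k] mu_step[of k] by simp
  qed
  have VL: "f X \<ge> f (L (Suc k)) + (Y k + mu k *\<^sub>R (H - L (Suc k) - S k)) \<bullet> (X - L (Suc k))" for k X
  proof -
    have "f X \<ge> f (L (Suc k)) + (mu k *\<^sub>R ((H - S k + (1 / mu k) *\<^sub>R Y k) - L (Suc k))) \<bullet> (X - L (Suc k))"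
      by (rule prox_vi[OF mupos cf]) (use L_step in \<open>simp add: frob_eq\<close>)
    moreover have "mu k *\<^sub>R ((H - S k + (1 / mu k) *\<^sub>R Y k) - L (Suc k)) = Y k + mu k *\<^sub>R (H - L (Suc k) - S k)"
      using mupos[of k] by (simp add: algebra_simps)
    ultimately show ?thesis by simp
  qed
  have VS: "g X \<ge> g (S (Suc k)) + Y (Suc k) \<bullet> (X - S (Suc k))" for k X
  proof -
    have "g X \<ge> g (S (Suc k)) + (mu k *\<^sub>R ((H - L (Suc k) + (1 / mu k) *\<^sub>R Y k) - S (Suc k))) \<bullet> (X - S (Suc k))"
      by (rule prox_vi[OF mupos cg]) (use S_step in \<open>simp add: frob_eq\<close>)
    moreover have "mu k *\<^sub>R ((H - L (Suc k) + (1 / mu k) *\<^sub>R Y k) - S (Suc k)) = Y (Suc k)"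
      using mupos[of k] by (simp add: Y_step algebra_simps)
    ultimately show ?thesis by simp
  qed
  have VS0: "g X \<ge> g (S k) + Y k \<bullet> (X - S k)" for k X
  proof (cases k)
    case 0 then show ?thesis using S0 Y0 gz g0[of X] by simp
  next
    case (Suc j) then show ?thesis using VS[of j X] by simp
  qed
  have step: "mu k * (norm (S (Suc k) - Ss))\<^sup>2 + (norm (Y (Suc k) - Ys))\<^sup>2 / mu k
      \<le> mu k * (norm (S k - Ss))\<^sup>2 + (norm (Y k - Ys))\<^sup>2 / mu k" for k
    by (rule admm_step[OF mupos VL VS VS VS0 K1 K2 KH Y_step])
  define W where "W k = (norm (S k - Ss))\<^sup>2 + (norm (Y k - Ys))\<^sup>2 / (mu k)\<^sup>2" for k
  have Wdec: "W (Suc k) \<le> W k" for k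
  proof -
    have m: "mu k > 0" "mu (Suc k) > 0" using mupos by auto
    have "(mu k)\<^sup>2 \<le> (mu (Suc k))\<^sup>2" using mumono[of k] m by (simp add: power_mono)
    then have "(norm (Y (Suc k) - Ys))\<^sup>2 / (mu (Suc k))\<^sup>2 \<le> (norm (Y (Suc k) - Ys))\<^sup>2 / (mu k)\<^sup>2"
      using m by (intro divide_left_mono) auto
    then have "W (Suc k) \<le> (norm (S (Suc k) - Ss))\<^sup>2 + (norm (Y (Suc k) - Ys))\<^sup>2 / (mu k)\<^sup>2"
      unfolding W_def by simp
    also have "\<dots> = (mu k * (norm (S (Suc k) - Ss))\<^sup>2 + (norm (Y (Suc k) - Ys))\<^sup>2 / mu k) / mu k"
      using m by (simp add: field_simps power2_eq_square)
    also have "\<dots> \<le> (mu k * (norm (S k - Ss))\<^sup>2 + (norm (Y k - Ys))\<^sup>2 / mu k) / mu k"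
      using step[of k] m by (intro divide_right_mono) auto
    also have "\<dots> = W k" unfolding W_def using m by (simp add: field_simps power2_eq_square)
    finally show ?thesis .
  qed
  have Wb: "W k \<le> W 0" for k
    by (induction k) (use Wdec order_trans in auto)
  define CS where "CS = norm Ss + sqrt (W 0)"
  define CY where "CY = norm Ys + sqrt ((mumax)\<^sup>2 * W 0)"
  have Sb: "norm (S k) \<le> CS" for k
  proof -
    have "(norm (S k - Ss))\<^sup>2 \<le> W 0" using Wb[of k] unfolding W_def
      by (smt (verit) divide_nonneg_nonneg zero_le_power2)
    then have "norm (S k - Ss) \<le> sqrt (W 0)" by (rule real_le_rsqrt)
    moreover have "norm (S k) \<le> norm (S k - Ss) + norm Ss" by (metis diff_add_cancel norm_triangle_ineq)
    ultimately show ?thesis unfolding CS_def by simp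
  qed
  have Yb: "norm (Y k) \<le> CY" for k
  proof -
    have m: "mu k > 0" using mupos by auto
    have "(norm (Y k - Ys))\<^sup>2 / (mu k)\<^sup>2 \<le> W 0" using Wb[of k] unfolding W_def
      by (smt (verit) zero_le_power2)
    then have "(norm (Y k - Ys))\<^sup>2 \<le> (mu k)\<^sup>2 * W 0" using m by (simp add: divide_le_eq mult.commute)
    also have "\<dots> \<le> (mumax)\<^sup>2 * W 0"
    proof (rule mult_right_mono)
      show "(mu k)\<^sup>2 \<le> mumax\<^sup>2" using muhigh[of k] m by (simp add: power_mono)
      show "0 \<le> W 0" unfolding W_def by simp
    qed
    finally have "norm (Y k - Ys) \<le> sqrt ((mumax)\<^sup>2 * W 0)" by (rule real_le_rsqrt)
    moreover have "norm (Y k) \<le> norm (Y k - Ys) + norm Ys" by (metis diff_add_cancel norm_triangle_ineq)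
    ultimately show ?thesis unfolding CY_def by simp
  qed
  define CL where "CL = norm H + CS + (CY + CY) / mu0"
  have Lb: "norm (L (Suc k)) \<le> CL" for k
  proof -
    have m: "mu k > 0" using mupos by auto
    have d: "(1 / mu k) *\<^sub>R (Y (Suc k) - Y k) = H - L (Suc k) - S (Suc k)"
      using Y_step[of k] m by simp
    have "L (Suc k) = H - S (Suc k) - (1 / mu k) *\<^sub>R (Y (Suc k) - Y k)"
      unfolding d by (simp add: algebra_simps)
    then have "norm (L (Suc k)) \<le> norm H + norm (S (Suc k)) + (1 / mu k) * norm (Y (Suc k) - Y k)"
      by (smt (verit) norm_scaleR norm_triangle_ineq4 abs_of_pos m divide_pos_pos zero_less_one)
    also have "(1 / mu k) * norm (Y (Suc k) - Y k) \<le> (1 / mu0) * (CY + CY)"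
    proof (rule mult_mono)
      show "1 / mu k \<le> 1 / mu0" using mulow[of k] mu0 by (simp add: frac_le)
      show "norm (Y (Suc k) - Y k) \<le> CY + CY"
        using Yb[of "Suc k"] Yb[of k] norm_triangle_ineq4[of "Y (Suc k)" "Y k"] by simp
      show "0 \<le> 1 / mu0" using mu0 by simp
      show "0 \<le> norm (Y (Suc k) - Y k)" by simp
    qed
    finally show ?thesis unfolding CL_def using Sb[of "Suc k"] by simp
  qed
  show ?thesis unfolding bounded_iff
  proof (intro exI ballI)
    fix z assume "z \<in> range (\<lambda>k. (L k, S k))"
    then obtain k where z: "z = (L k, S k)" by blast
    have "norm (L k) \<le> max (norm (L 0)) CL" using Lb by (cases k) (auto intro: le_max_iff_disj[THEN iffD2])
    then show "norm z \<le> max (norm (L 0)) CL + CS"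
      unfolding z using norm_Pair_le[of "L k" "S k"] Sb[of k] by simp
  qed
qed

end
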